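(* Let $q>1$ be an integer reducer capacity and consider $m$ inputs each of size one. Then every A2A mapping schema for these inputs has communication cost at least $m\left\lfloor\frac{m-1}{q-1}\right\rfloor$ and uses at least $\left\lfloor\frac{m}{q}\right\rfloor\left\lfloor\frac{m-1}{q-1}\right\rfloor$ reducers.
   Context: An A2A mapping schema for inputs with sizes $w_1,\dots,w_m$ and reducer capacity $q$ is an assignment of the inputs to a collection of reducers (each input may go to several reducers) such that every reducer receives inputs of total size at most $q$ and every pair of distinct inputs is assigned together to at least one reducer. The communication cost is the sum over reducers of the total size of the inputs assigned to it. *)

theory Defs
  imports Main
begin

text \<open>Inputs are indexed by 0..<m with sizes w i; a mapping schema is a finite list of
reducers, each reducer being the set of inputs assigned to it (an input may go to several
reducers; reducers with identical input sets are counted separately).\<close>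

definition a2a_schema :: "(nat \<Rightarrow> nat) \<Rightarrow> nat \<Rightarrow> nat \<Rightarrow> nat set list \<Rightarrow> bool" where
  "a2a_schema w q m R \<longleftrightarrow>
     (\<forall>r\<in>set R. r \<subseteq> {..<m} \<and> (\<Sum>i\<in>r. w i) \<le> q) \<and>
     (\<forall>i<m. \<forall>j<m. i \<noteq> j \<longrightarrow> (\<exists>r\<in>set R. i \<in> r \<and> j \<in> r))"

definition comm_cost :: "(nat \<Rightarrow> nat) \<Rightarrow> nat set list \<Rightarrow> nat" where
  "comm_cost w R = sum_list (map (\<lambda>r. \<Sum>i\<in>r. w i) R)"

end

theory Submission
  imports Defs
begin

lemma card_Union_list_le:
  "(\<forall>r\<in>set L. finite r \<and> card r \<le> k) \<Longrightarrow> card (\<Union>(set L)) \<le> length L * k"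
proof (induction L)
  case Nil then show ?case by simp
next
  case (Cons a L)
  have "card (\<Union>(set (a#L))) \<le> card a + card (\<Union>(set L))"
    by (simp add: card_Un_le)
  also have "\<dots> \<le> k + length L * k" using Cons by (intro add_mono) auto
  finally show ?case by simp
qed

lemma sum_card_le:
  "(\<forall>r\<in>set L. card r \<le> k) \<Longrightarrow> sum_list (map card L) \<le> length L * k"
  by (induction L) (auto intro: add_mono)

lemma sum_card_count:
  fixes L :: "nat set list"
  shows "(\<forall>r\<in>set L. r \<subseteq> {..<m}) \<Longrightarrow>
   sum_list (map card L) = (\<Sum>i<m. length (filter (\<lambda>r. i \<in> r) L))"
proof (induction L)
  case Nil then show ?case by simp
next
  case (Cons a L)
  have "card a = (\<Sum>i<m. (if i \<in> a then 1 else 0))"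
  proof -
    have "a \<subseteq> {..<m}" using Cons.prems by simp
    then have "{..<m} \<inter> a = a" by blast
    moreover have "(\<Sum>i<m. (if i \<in> a then 1 else 0::nat)) = card ({..<m} \<inter> a)"
      by (simp add: sum.If_cases)
    ultimately show ?thesis by simp
  qed
  moreover have "(\<Sum>i<m. length (filter (\<lambda>r. i \<in> r) (a#L)))
      = (\<Sum>i<m. (if i \<in> a then 1 else 0) + length (filter (\<lambda>r. i \<in> r) L))"
    by (intro sum.cong) auto
  ultimately show ?case using Cons by (simp add: sum.distrib)
qed

theorem theorem6:
  fixes q m :: nat and R :: "nat set list"
  assumes "q > 1"
    and "a2a_schema (\<lambda>_. 1) q m R"
  shows "comm_cost (\<lambda>_. 1) R \<ge> m * ((m - 1) div (q - 1))
         \<and> length R \<ge> (m div q) * ((m - 1) div (q - 1))"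
proof -
  define k where "k = (m - 1) div (q - 1)"
  have sub: "\<forall>r\<in>set R. r \<subseteq> {..<m}" and cq: "\<forall>r\<in>set R. card r \<le> q"
    and cov: "\<forall>i<m. \<forall>j<m. i \<noteq> j \<longrightarrow> (\<exists>r\<in>set R. i \<in> r \<and> j \<in> r)"
    using assms(2) unfolding a2a_schema_def by auto
  have fin: "\<forall>r\<in>set R. finite r" using sub finite_subset by blast
  have cc: "comm_cost (\<lambda>_. 1) R = sum_list (map card R)"
    unfolding comm_cost_def by (induction R) auto
  have each: "k \<le> length (filter (\<lambda>r. i \<in> r) R)" if im: "i < m" for i
  proof -
    define L where "L = map (\<lambda>r. r - {i}) (filter (\<lambda>r. i \<in> r) R)"
    have "\<forall>r\<in>set L. finite r" using fin unfolding L_def by auto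
    then have fU: "finite (\<Union>(set L))" by blast
    have "{..<m} - {i} \<subseteq> \<Union>(set L)"
    proof
      fix x assume x: "x \<in> {..<m} - {i}"
      then obtain r where r: "r \<in> set R" "i \<in> r" "x \<in> r" using cov[rule_format, of i x] im x by auto
      then have "x \<in> r - {i}" using x by simp
      moreover have "r - {i} \<in> set L" using r unfolding L_def by simp
      ultimately show "x \<in> \<Union>(set L)" by blast
    qed
    hence "card ({..<m} - {i}) \<le> card (\<Union>(set L))"
      by (rule card_mono[OF fU])
    also have "\<dots> \<le> length L * (q - 1)"
    proof (rule card_Union_list_le, intro ballI)
      fix r assume "r \<in> set L"
      then obtain s where s: "s \<in> set R" "i \<in> s" "r = s - {i}" unfolding L_def by auto
      then show "finite r \<and> card r \<le> q - 1" using fin cq by auto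
    qed
    also have "length L = length (filter (\<lambda>r. i \<in> r) R)" unfolding L_def by simp
    finally have mle: "m - 1 \<le> length (filter (\<lambda>r. i \<in> r) R) * (q - 1)"
      using im by simp
    show ?thesis
    proof -
      have "(m - 1) div (q - 1) \<le> (length (filter (\<lambda>r. i \<in> r) R) * (q - 1)) div (q - 1)"
        by (rule div_le_mono) (rule mle)
      also have "\<dots> = length (filter (\<lambda>r. i \<in> r) R)" using assms(1) by simp
      finally show ?thesis by (simp add: k_def)
    qed
  qed
  have c1: "m * k \<le> sum_list (map card R)"
  proof -
    have "m * k = (\<Sum>i<m. k)" by simp
    also have "\<dots> \<le> (\<Sum>i<m. length (filter (\<lambda>r. i \<in> r) R))"
      by (intro sum_mono each) simp
    also have "\<dots> = sum_list (map card R)" using sum_card_count[OF sub] by simp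
    finally show ?thesis .
  qed
  have "sum_list (map card R) \<le> length R * q" using sum_card_le cq by blast
  hence "(m div q) * k * q \<le> length R * q" using c1
  proof -
    have "(m div q) * k * q = (m div q * q) * k" by simp
    also have "\<dots> \<le> m * k" by (intro mult_le_mono1) simp
    finally show ?thesis using c1 \<open>sum_list (map card R) \<le> length R * q\<close> by linarith
  qed
  hence "(m div q) * k \<le> length R" using assms(1) by simp
  then show ?thesis using c1 cc k_def by simp
qed

end
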